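(* Assume Assumption A-0 holds and let $\psi:\mathbb{R}^d\to\mathbb{R}$ be a bounded measurable function. Define recursively $\alpha(0)=2$, $\beta(0)=2$ and, for $T\ge 1$, $\alpha(T)=4\max(1,\alpha(T-1))$, $\beta(T)=\max\!\big(8,\ 16\beta(T-1)\gamma_T^2/\kappa_T^2\big)$. Then for every $T\ge 0$, every $N\ge1$ and every $\varepsilon>0$, $$\mathbb{P}_T\Big(\Big|\frac1N\sum_{i=1}^N\psi(x_{i,T})-m_T(\psi)\Big|>\varepsilon\Big)\le \alpha(T)\,e^{-N\varepsilon^2/(\beta(T)\|\psi\|_\infty^2)},$$ and for every $T\ge1$, $$\mathbb{P}_T\Big(\Big|\int\psi\,(f^N_{T|T}-f_{T|T})\,d\mu\Big|>\varepsilon\Big)\le \alpha(T)\,e^{-N\varepsilon^2/(\beta(T)\|\psi\|_\infty^2)}.$$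
   Context: Hidden Markov model: $(X_t)_{t\ge0}$ is an $\mathbb{R}^d$-valued Markov chain with $\mathbb{P}(X_0\in A)=\int_A a_0\,d\mu$ and $\mathbb{P}(X_t\in A\mid X_{t-1}=x)=\int_A a_t(x,x')\,\mu(dx')$ ($t\ge1$), where $\mu$ is a reference measure on $\mathbb{R}^d$ and $a_0$, $a_t$ are a probability density and probability kernel densities w.r.t. $\mu$. Observations $(Y_t)_{t\ge1}$ are $\mathbb{R}^m$-valued, conditionally independent given $(X_t)$, with $\mathbb{P}(Y_t\in B\mid X_t=x)=\int_B b_t(x,y)\,\nu(dy)$. Observations $y_1,\dots,y_T$ are fixed, and $\mathbb{P}_T=\mathbb{P}(\cdot\mid Y_1=y_1,\dots,Y_T=y_T)$ with expectation $\mathbb{E}_T$. The filter density $f_{t|t}$ (density of $X_t$ given $Y_1^t=y_1^t$ w.r.t. $\mu$) satisfies $f_{0|0}=a_0$ and $f_{t|t}(x)=\frac{b_t(x,y_t)\int f_{t-1|t-1}(u)a_t(u,x)\mu(du)}{\int b_t(x',y_t)\int f_{t-1|t-1}(u)a_t(u,x')\mu(du)\mu(dx')}$. Particle filter with $N$ particles: $(x_{i,0})_{1\le i\le N}$ i.i.d. with law $a_0\,d\mu$; given all particles up to generation $t-1$, the $(x_{i,t})_{1\le i\le N}$ are i.i.d. with law $f^N_{t|t}\,d\mu$, where $$f^N_{t|t}(x)=\frac{b_t(x,y_t)\frac1N\sum_{i=1}^N a_t(x_{i,t-1},x)}{\int b_t(x',y_t)\frac1N\sum_{i=1}^N a_t(x_{i,t-1},x')\,\mu(dx')}.$$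 Notation: $m_t(\psi)=\int\psi f_{t|t}\,d\mu$; $L_t\psi(x)=\int a_t(x,u)b_t(u,y_t)\psi(u)\,\mu(du)$; $\mathbb{1}$ is the constant function 1. Assumption A-0: for every $t\ge1$, $\gamma_t:=\sup_x L_t\mathbb{1}(x)<\infty$ and $L_t\mathbb{1}(x)>0$ for all $x\in\mathbb{R}^d$. Under A-0, $\kappa_t:=\int L_t\mathbb{1}(x)f_{t-1|t-1}(x)\,\mu(dx)>0$. *)

theory Defs
  imports "HOL-Probability.Probability"
begin

text \<open>Hidden Markov model data: reference measure mu on the state space,
  initial density a0, transition kernel densities a t, observation densities b t
  (w.r.t. nu), fixed observations y t.  Particles are indexed by 0..N-1.\<close>

definition Lone :: "'a measure \<Rightarrow> (nat \<Rightarrow> 'a \<Rightarrow> 'a \<Rightarrow> real) \<Rightarrow> (nat \<Rightarrow> 'a \<Rightarrow> 'b \<Rightarrow> real)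
    \<Rightarrow> (nat \<Rightarrow> 'b) \<Rightarrow> nat \<Rightarrow> 'a \<Rightarrow> ennreal" where
  "Lone mu a b y t x = (\<integral>\<^sup>+ u. ennreal (a t x u * b t u (y t)) \<partial>mu)"

fun filt :: "'a measure \<Rightarrow> ('a \<Rightarrow> real) \<Rightarrow> (nat \<Rightarrow> 'a \<Rightarrow> 'a \<Rightarrow> real) \<Rightarrow> (nat \<Rightarrow> 'a \<Rightarrow> 'b \<Rightarrow> real)
    \<Rightarrow> (nat \<Rightarrow> 'b) \<Rightarrow> nat \<Rightarrow> 'a \<Rightarrow> real" where
  "filt mu a0 a b y 0 = a0"
| "filt mu a0 a b y (Suc t) =
     (let pred = (\<lambda>x. \<integral>\<^sup>+ u. ennreal (filt mu a0 a b y t u * a (Suc t) u x) \<partial>mu);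
          num = (\<lambda>x. ennreal (b (Suc t) x (y (Suc t))) * pred x)
      in (\<lambda>x. enn2real (num x) / enn2real (\<integral>\<^sup>+ x'. num x' \<partial>mu)))"

definition mfilt :: "'a measure \<Rightarrow> ('a \<Rightarrow> real) \<Rightarrow> (nat \<Rightarrow> 'a \<Rightarrow> 'a \<Rightarrow> real) \<Rightarrow> (nat \<Rightarrow> 'a \<Rightarrow> 'b \<Rightarrow> real)
    \<Rightarrow> (nat \<Rightarrow> 'b) \<Rightarrow> nat \<Rightarrow> ('a \<Rightarrow> real) \<Rightarrow> real" where
  "mfilt mu a0 a b y t psi = (\<integral> x. psi x * filt mu a0 a b y t x \<partial>mu)"

definition pf_dens :: "'a measure \<Rightarrow> (nat \<Rightarrow> 'a \<Rightarrow> 'a \<Rightarrow> real) \<Rightarrow> (nat \<Rightarrow> 'a \<Rightarrow> 'b \<Rightarrow> real)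
    \<Rightarrow> (nat \<Rightarrow> 'b) \<Rightarrow> nat \<Rightarrow> nat \<Rightarrow> (nat \<Rightarrow> 'a) \<Rightarrow> 'a \<Rightarrow> real" where
  "pf_dens mu a b y N t xs =
     (let num = (\<lambda>x. ennreal (b t x (y t) * ((1 / real N) * (\<Sum>i<N. a t (xs i) x))))
      in (\<lambda>x. enn2real (num x) / enn2real (\<integral>\<^sup>+ x'. num x' \<partial>mu)))"

fun particles :: "'a measure \<Rightarrow> ('a \<Rightarrow> real) \<Rightarrow> (nat \<Rightarrow> 'a \<Rightarrow> 'a \<Rightarrow> real) \<Rightarrow> (nat \<Rightarrow> 'a \<Rightarrow> 'b \<Rightarrow> real)
    \<Rightarrow> (nat \<Rightarrow> 'b) \<Rightarrow> nat \<Rightarrow> nat \<Rightarrow> (nat \<Rightarrow> 'a) measure" where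
  "particles mu a0 a b y N 0 = PiM {..<N} (\<lambda>_. density mu (\<lambda>x. ennreal (a0 x)))"
| "particles mu a0 a b y N (Suc t) =
     bind (particles mu a0 a b y N t)
       (\<lambda>xs. PiM {..<N} (\<lambda>_. density mu (\<lambda>x. ennreal (pf_dens mu a b y N (Suc t) xs x))))"

definition gamma :: "'a measure \<Rightarrow> (nat \<Rightarrow> 'a \<Rightarrow> 'a \<Rightarrow> real) \<Rightarrow> (nat \<Rightarrow> 'a \<Rightarrow> 'b \<Rightarrow> real)
    \<Rightarrow> (nat \<Rightarrow> 'b) \<Rightarrow> nat \<Rightarrow> real" where
  "gamma mu a b y t = enn2real (SUP x. Lone mu a b y t x)"

definition kappa :: "'a measure \<Rightarrow> ('a \<Rightarrow> real) \<Rightarrow> (nat \<Rightarrow> 'a \<Rightarrow> 'a \<Rightarrow> real) \<Rightarrow> (nat \<Rightarrow> 'a \<Rightarrow> 'b \<Rightarrow> real)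
    \<Rightarrow> (nat \<Rightarrow> 'b) \<Rightarrow> nat \<Rightarrow> real" where
  "kappa mu a0 a b y t =
     enn2real (\<integral>\<^sup>+ x. Lone mu a b y t x * ennreal (filt mu a0 a b y (t - 1) x) \<partial>mu)"

fun alpha :: "nat \<Rightarrow> real" where
  "alpha 0 = 2"
| "alpha (Suc T) = 4 * max 1 (alpha T)"

fun beta :: "(nat \<Rightarrow> real) \<Rightarrow> (nat \<Rightarrow> real) \<Rightarrow> nat \<Rightarrow> real" where
  "beta g k 0 = 2"
| "beta g k (Suc T) = max 8 (16 * beta g k T * (g (Suc T))\<^sup>2 / (k (Suc T))\<^sup>2)"

end

theory Submission
  imports Defs
begin


lemma hoeffding_prod:
  fixes mu :: "'a measure" and g :: "'a \<Rightarrow> real" and psi :: "'a \<Rightarrow> real"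
  assumes g: "g \<in> borel_measurable mu" "\<And>x. g x \<ge> 0" "(\<integral>\<^sup>+ x. ennreal (g x) \<partial>mu) = 1"
    and psi: "psi \<in> borel_measurable mu" "\<And>x. \<bar>psi x\<bar> \<le> S" "S > 0"
    and N: "N \<ge> 1" and d: "d > 0"
  shows "measure (PiM {..<N} (\<lambda>_. density mu (\<lambda>x. ennreal (g x))))
     {z \<in> space (PiM {..<N} (\<lambda>_. density mu (\<lambda>x. ennreal (g x)))).
        \<bar>(\<Sum>i<N. psi (z i)) / real N - (\<integral>x. psi x * g x \<partial>mu)\<bar> > d}
     \<le> 2 * exp (- (real N * d\<^sup>2) / (2 * S\<^sup>2))"
proof -
  define D where "D = density mu (\<lambda>x. ennreal (g x))"
  define P where "P = PiM {..<N} (\<lambda>_. D)"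
  have "emeasure D (space D) = (\<integral>\<^sup>+ x. ennreal (g x) \<partial>mu)" unfolding D_def
    using g(1) by (subst emeasure_density) (auto intro!: nn_integral_cong simp: indicator_def)
  hence pD: "prob_space D" using g by (intro prob_spaceI) simp
  interpret PP: product_prob_space "\<lambda>_. D" "{..<N}"
    by (intro product_prob_spaceI pD)
  interpret P: prob_space P unfolding P_def by (rule PP.P.prob_space_axioms)
  have psiD[measurable]: "psi \<in> borel_measurable D" unfolding D_def using psi by simp
  have comp: "distr P D (\<lambda>z. z i) = D" if "i < N" for i
    unfolding P_def using that by (intro distr_PiM_component pD) auto
  have ind0: "P.indep_vars (\<lambda>_. D) (\<lambda>i z. z i) {..<N}"
  proof (subst P.indep_vars_iff_distr_eq_PiM')
    show "{..<N} \<noteq> {}" using N by (auto simp: lessThan_empty_iff)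
    show "(\<lambda>z. z i) \<in> measurable P D" if "i \<in> {..<N}" for i
      unfolding P_def using that by simp
    have "distr P (Pi\<^sub>M {..<N} (\<lambda>_. D)) (\<lambda>x. restrict x {..<N}) = distr P P (\<lambda>x. x)"
      unfolding P_def by (intro distr_cong) (auto simp: space_PiM)
    also have "\<dots> = P" by (rule distr_id2) simp
    also have "P = Pi\<^sub>M {..<N} (\<lambda>i. distr P D (\<lambda>z. z i))"
      unfolding P_def by (intro PiM_cong) (auto simp: comp[unfolded P_def])
    finally show "distr P (Pi\<^sub>M {..<N} (\<lambda>_. D)) (\<lambda>x. restrict x {..<N}) = Pi\<^sub>M {..<N} (\<lambda>i. distr P D (\<lambda>z. z i))" .
  qed
  have ind: "P.indep_vars (\<lambda>_. borel) (\<lambda>i z. psi (z i)) {..<N}"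
    using P.indep_vars_compose2[OF ind0, of "\<lambda>_. psi" "\<lambda>_. borel"] by simp
  have expct: "P.expectation (\<lambda>z. psi (z i)) = (\<integral>x. psi x * g x \<partial>mu)" if "i < N" for i
  proof -
    have "P.expectation (\<lambda>z. psi (z i)) = integral\<^sup>L (distr P D (\<lambda>z. z i)) psi"
      using that by (subst integral_distr) (auto simp: P_def)
    also have "\<dots> = integral\<^sup>L D psi" using comp[OF that] by simp
    also have "\<dots> = (\<integral>x. psi x * g x \<partial>mu)" unfolding D_def
      using g psi by (subst integral_density) (auto simp: mult.commute)
    finally show ?thesis .
  qed
  interpret H: Hoeffding_ineq P "{..<N}" "\<lambda>i z. psi (z i)" "\<lambda>_. -S" "\<lambda>_. S"
     "\<Sum>i<N. P.expectation (\<lambda>z. psi (z i))"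
  proof unfold_locales
    show "finite {..<N}" by simp
    show "P.indep_vars (\<lambda>_. borel) (\<lambda>i z. psi (z i)) {..<N}" by (rule ind)
    show "AE x in P. psi (x i) \<in> {- S..S}" for i using psi(2) by (intro AE_I2) (auto simp: abs_le_iff minus_le_iff)
  qed simp
  define m where "m = (\<integral>x. psi x * g x \<partial>mu)"
  have mu_eq: "(\<Sum>i<N. P.expectation (\<lambda>z. psi (z i))) = real N * m"
    using expct by (simp add: m_def)
  have pos: "(\<Sum>i<N. (S - - S)\<^sup>2) > 0" using N psi(3) by simp
  have "P.prob {z \<in> space P. \<bar>(\<Sum>i<N. psi (z i)) / real N - m\<bar> > d}
      \<le> P.prob {z \<in> space P. \<bar>(\<Sum>i\<in>{..<N}. psi (z i)) - real N * m\<bar> \<ge> real N * d}"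
  proof (rule P.finite_measure_mono)
    show "{z \<in> space P. \<bar>(\<Sum>i<N. psi (z i)) / real N - m\<bar> > d}
      \<subseteq> {z \<in> space P. \<bar>(\<Sum>i\<in>{..<N}. psi (z i)) - real N * m\<bar> \<ge> real N * d}"
    proof safe
      fix z assume "z \<in> space P" "d < \<bar>(\<Sum>i<N. psi (z i)) / real N - m\<bar>"
      moreover have "(\<Sum>i<N. psi (z i)) / real N - m = ((\<Sum>i<N. psi (z i)) - real N * m) / real N"
        using N by (simp add: field_simps)
      ultimately show "real N * d \<le> \<bar>(\<Sum>i<N. psi (z i)) - real N * m\<bar>"
        using N by (simp add: abs_div field_simps)
    qed
    show "{z \<in> space P. real N * d \<le> \<bar>(\<Sum>i\<in>{..<N}. psi (z i)) - real N * m\<bar>} \<in> P.events"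
      unfolding P_def by measurable
  qed
  also have "\<dots> \<le> 2 * exp (-2 * (real N * d)\<^sup>2 / (\<Sum>i<N. (S - - S)\<^sup>2))"
    using H.Hoeffding_ineq_abs_ge[of "real N * d"] d pos mu_eq by simp
  also have "-2 * (real N * d)\<^sup>2 / (\<Sum>i<N. (S - - S)\<^sup>2) = - (real N * d\<^sup>2) / (2 * S\<^sup>2)"
    using N psi(3) by (simp add: power2_eq_square field_simps)
  finally show ?thesis unfolding P_def D_def m_def .
qed



lemma prob_density:
  assumes g: "g \<in> borel_measurable mu" "\<And>x. g x \<ge> 0" "(\<integral>\<^sup>+ x. ennreal (g x) \<partial>mu) = 1"
  shows "prob_space (density mu (\<lambda>x. ennreal (g x)))"
proof -
  have "emeasure (density mu (\<lambda>x. ennreal (g x))) (space (density mu (\<lambda>x. ennreal (g x)))) = (\<integral>\<^sup>+ x. ennreal (g x) \<partial>mu)"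
    using g(1) by (subst emeasure_density) (auto intro!: nn_integral_cong simp: indicator_def)
  thus ?thesis using g by (intro prob_spaceI) simp
qed

lemma kernel_meas:
  fixes M :: "'c measure" and mu :: "'a measure" and g :: "'c \<Rightarrow> 'a \<Rightarrow> real"
  assumes sf: "sigma_finite_measure mu"
    and gm: "(\<lambda>(x, z). g x z) \<in> borel_measurable (M \<Otimes>\<^sub>M mu)"
    and gpos: "\<And>x z. g x z \<ge> 0" and g1: "\<And>x. x \<in> space M \<Longrightarrow> (\<integral>\<^sup>+ z. ennreal (g x z) \<partial>mu) = 1"
    and I: "finite I"
  shows "(\<lambda>x. PiM I (\<lambda>_. density mu (\<lambda>z. ennreal (g x z)))) \<in> measurable M (prob_algebra (PiM I (\<lambda>_. mu)))"
proof (rule measurable_prob_algebra_generated[OF sets_PiM Int_stable_prod_algebra prod_algebra_sets_into_space])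
  interpret sigma_finite_measure mu by (rule sf)
  have gx: "g x \<in> borel_measurable mu" if "x \<in> space M" for x
    using measurable_Pair2[OF gm that] by simp
  show "prob_space (PiM I (\<lambda>_. density mu (\<lambda>z. ennreal (g x z))))" if "x \<in> space M" for x
    by (intro prob_space_PiM prob_density gx that gpos g1)
  show "sets (PiM I (\<lambda>_. density mu (\<lambda>z. ennreal (g x z)))) = sets (PiM I (\<lambda>_. mu))" for x
    by (intro sets_PiM_cong) auto
  fix A assume "A \<in> prod_algebra I (\<lambda>_. mu)"
  then obtain X where A: "A = PiE I X" and X: "X \<in> (\<Pi> j\<in>I. sets mu)"
    unfolding prod_algebra_eq_finite[OF I] by auto
  have "(\<lambda>x. \<Prod>j\<in>I. \<integral>\<^sup>+ z. ennreal (g x z) * indicator (X j) z \<partial>mu) \<in> borel_measurable M"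
  proof (intro borel_measurable_prod_ennreal)
    fix j assume "j \<in> I"
    then have [measurable]: "X j \<in> sets mu" using X by auto
    show "(\<lambda>x. \<integral>\<^sup>+ z. ennreal (g x z) * indicator (X j) z \<partial>mu) \<in> borel_measurable M"
      using gm by measurable
  qed
  moreover have "emeasure (PiM I (\<lambda>_. density mu (\<lambda>z. ennreal (g x z)))) A =
        (\<Prod>j\<in>I. \<integral>\<^sup>+ z. ennreal (g x z) * indicator (X j) z \<partial>mu)" if x: "x \<in> space M" for x
  proof -
    interpret PP: product_prob_space "\<lambda>_. density mu (\<lambda>z. ennreal (g x z))" I
      by (intro product_prob_spaceI prob_density gx x gpos g1)
    show ?thesis unfolding A using X I gx[OF x]
      by (subst PP.emeasure_PiM) (auto intro!: prod.cong emeasure_density simp: Pi_iff)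
  qed
  ultimately show "(\<lambda>x. emeasure (PiM I (\<lambda>_. density mu (\<lambda>z. ennreal (g x z)))) A) \<in> borel_measurable M"
    by (subst measurable_cong) auto
qed



lemma exp_aux:
  fixes c p q :: real
  assumes "0 \<le> c" "0 < p" "p \<le> q"
  shows "exp (- c / p) \<le> exp (- c / q)"
proof -
  have "c / q \<le> c / p" using assms by (intro divide_left_mono) auto
  then show ?thesis by simp
qed

lemma ratio_aux:
  fixes AN BN A B S d :: real
  assumes "B > 0" "BN > 0" "\<bar>AN\<bar> \<le> S * BN" "S > 0"
    "\<bar>AN - A\<bar> \<le> d * B / 2" "\<bar>BN - B\<bar> \<le> d * B / (2 * S)"
  shows "\<bar>AN / BN - A / B\<bar> \<le> d"
proof -
  have eq: "AN / BN - A / B = ((AN / BN) * (B - BN) + (AN - A)) / B"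
    using assms(1,2) by (simp add: field_simps)
  have "\<bar>(AN / BN) * (B - BN)\<bar> \<le> S * \<bar>B - BN\<bar>"
  proof -
    have "\<bar>AN / BN\<bar> \<le> S" using assms(2,3) by (simp add: abs_div divide_le_eq)
    then have "\<bar>AN / BN\<bar> * \<bar>B - BN\<bar> \<le> S * \<bar>B - BN\<bar>" by (rule mult_right_mono) simp
    then show ?thesis by (simp only: abs_mult)
  qed
  also have "S * \<bar>B - BN\<bar> \<le> d * B / 2"
    using assms(4,6) by (simp add: abs_minus_commute field_simps)
  finally have "\<bar>(AN / BN) * (B - BN) + (AN - A)\<bar> \<le> d * B"
    using assms(5) by linarith
  then show ?thesis unfolding eq using assms(1) by (simp add: abs_div divide_le_eq)
qed

locale hmm =
  fixes mu :: "'a::euclidean_space measure" and nu :: "'b::euclidean_space measure"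
    and a0 :: "'a \<Rightarrow> real" and a :: "nat \<Rightarrow> 'a \<Rightarrow> 'a \<Rightarrow> real"
    and b :: "nat \<Rightarrow> 'a \<Rightarrow> 'b \<Rightarrow> real" and y :: "nat \<Rightarrow> 'b"
  assumes mu: "sets mu = sets borel" "sigma_finite_measure mu"
    and nu: "sets nu = sets borel" "sigma_finite_measure nu"
    and a0: "a0 \<in> borel_measurable mu" "\<forall>x. a0 x \<ge> 0" "(\<integral>\<^sup>+ x. ennreal (a0 x) \<partial>mu) = 1"
    and a: "\<forall>t\<ge>1. (\<lambda>(x, x'). a t x x') \<in> borel_measurable (mu \<Otimes>\<^sub>M mu)"
           "\<forall>t\<ge>1. \<forall>x x'. a t x x' \<ge> 0"
           "\<forall>t\<ge>1. \<forall>x. (\<integral>\<^sup>+ x'. ennreal (a t x x') \<partial>mu) = 1"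
    and b: "\<forall>t\<ge>1. (\<lambda>(x, v). b t x v) \<in> borel_measurable (mu \<Otimes>\<^sub>M nu)"
           "\<forall>t\<ge>1. \<forall>x v. b t x v \<ge> 0"
           "\<forall>t\<ge>1. \<forall>x. (\<integral>\<^sup>+ v. ennreal (b t x v) \<partial>nu) = 1"
    and A0: "\<forall>t\<ge>1. (SUP x. Lone mu a b y t x) < \<top>"
            "\<forall>t\<ge>1. \<forall>x. Lone mu a b y t x > 0"
begin

sublocale M: sigma_finite_measure mu by (rule mu(2))
sublocale MM: pair_sigma_finite mu mu by unfold_locales

lemma space_mu[simp]: "space mu = UNIV"
  using sets_eq_imp_space_eq[OF mu(1)] by simp
lemma space_nu[simp]: "space nu = UNIV"
  using sets_eq_imp_space_eq[OF nu(1)] by simp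

lemma a_meas[measurable]: "(\<lambda>(x, x'). a (Suc t) x x') \<in> borel_measurable (mu \<Otimes>\<^sub>M mu)"
  using a(1) by simp
lemma a_nn[simp]: "a (Suc t) x x' \<ge> 0" using a(2) by simp
lemma b_nn[simp]: "b (Suc t) x v \<ge> 0" using b(2) by simp
lemma b_meas[measurable]: "(\<lambda>x. b (Suc t) x (y (Suc t))) \<in> borel_measurable mu"
proof -
  have "(\<lambda>(x, v). b (Suc t) x v) \<in> borel_measurable (mu \<Otimes>\<^sub>M nu)" using b(1) by simp
  then show ?thesis by (rule measurable_Pair_compose_split) auto
qed

abbreviation "F t \<equiv> filt mu a0 a b y t"
abbreviation "Lo t x \<equiv> Lone mu a b y t x"

definition "L1 t x = enn2real (Lone mu a b y t x)"
definition "Lr t psi x = (\<integral>u. a t x u * b t u (y t) * psi u \<partial>mu)"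

lemma Lone_meas[measurable]: "(\<lambda>x. Lo (Suc t) x) \<in> borel_measurable mu"
  unfolding Lone_def by measurable

lemma Lone_pos: "Lo (Suc t) x > 0" using A0(2) by simp
lemma Lone_le_SUP: "Lo (Suc t) x \<le> (SUP x. Lo (Suc t) x)" by (rule SUP_upper) simp
lemma SUP_fin: "(SUP x. Lo (Suc t) x) < \<top>" using A0(1) by simp
lemma Lone_fin: "Lo (Suc t) x < \<top>" using Lone_le_SUP SUP_fin le_less_trans by blast
lemma Lone_eq: "Lo (Suc t) x = ennreal (L1 (Suc t) x)"
  unfolding L1_def using Lone_fin[of t x] by (simp add: less_top[symmetric] ennreal_enn2real)
lemma L1_pos: "L1 (Suc t) x > 0"
  unfolding L1_def using Lone_pos Lone_fin by (simp add: enn2real_positive_iff)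
lemma L1_meas[measurable]: "L1 (Suc t) \<in> borel_measurable mu"
  unfolding L1_def[abs_def] by measurable
lemma gamma_eq: "ennreal (gamma mu a b y (Suc t)) = (SUP x. Lo (Suc t) x)"
  unfolding gamma_def using SUP_fin[of t] by (simp add: less_top[symmetric] ennreal_enn2real)
lemma L1_le_gamma: "L1 (Suc t) x \<le> gamma mu a b y (Suc t)"
proof -
  have "ennreal (L1 (Suc t) x) \<le> ennreal (gamma mu a b y (Suc t))"
    using Lone_le_SUP[of t x] unfolding Lone_eq gamma_eq by simp
  moreover have "gamma mu a b y (Suc t) \<ge> 0" unfolding gamma_def by simp
  ultimately show ?thesis by (simp add: ennreal_le_iff)
qed
lemma gamma_pos: "gamma mu a b y (Suc t) > 0"
  using L1_le_gamma[of t undefined] L1_pos[of t undefined] by linarith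

lemma absbound_aux:
  fixes c p S :: real
  assumes "0 \<le> c" "\<bar>p\<bar> \<le> S"
  shows "c * p \<le> S * c" "- (c * p) \<le> S * c" "\<bar>c * p\<bar> \<le> \<bar>S * c\<bar>"
proof -
  have "c * p \<le> c * S" using assms by (intro mult_left_mono) auto
  moreover have "c * (- p) \<le> c * S" using assms by (intro mult_left_mono) auto
  ultimately show "c * p \<le> S * c" "- (c * p) \<le> S * c" by (auto simp: mult.commute)
  then show "\<bar>c * p\<bar> \<le> \<bar>S * c\<bar>" by linarith
qed

lemma ab_integrable: "integrable mu (\<lambda>u. a (Suc t) x u * b (Suc t) u (y (Suc t)))"
proof (rule integrableI_nn_integral_finite)
  show "(\<integral>\<^sup>+ u. ennreal (a (Suc t) x u * b (Suc t) u (y (Suc t))) \<partial>mu) = ennreal (L1 (Suc t) x)"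
    using Lone_eq[of t x] unfolding Lone_def by simp
qed auto

lemma Lr_one: "Lr (Suc t) (\<lambda>_. 1) x = L1 (Suc t) x"
  unfolding Lr_def L1_def Lone_def by (subst integral_eq_nn_integral) auto

lemma Lr_meas[measurable]:
  assumes [measurable]: "psi \<in> borel_measurable mu"
  shows "Lr (Suc t) psi \<in> borel_measurable mu"
  unfolding Lr_def[abs_def] by measurable

lemma Lr_integrable:
  assumes [measurable]: "psi \<in> borel_measurable mu" and S: "\<And>x. \<bar>psi x\<bar> \<le> S"
  shows "integrable mu (\<lambda>u. a (Suc t) x u * b (Suc t) u (y (Suc t)) * psi u)"
proof (rule Bochner_Integration.integrable_bound)
  show "integrable mu (\<lambda>u. S * (a (Suc t) x u * b (Suc t) u (y (Suc t))))"
    using ab_integrable by simp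
  show "AE u in mu. norm (a (Suc t) x u * b (Suc t) u (y (Suc t)) * psi u)
     \<le> norm (S * (a (Suc t) x u * b (Suc t) u (y (Suc t))))"
  proof (intro AE_I2)
    fix u
    show "norm (a (Suc t) x u * b (Suc t) u (y (Suc t)) * psi u)
     \<le> norm (S * (a (Suc t) x u * b (Suc t) u (y (Suc t))))"
      using absbound_aux(3)[of "a (Suc t) x u * b (Suc t) u (y (Suc t))" "psi u" S] S by simp
  qed
qed measurable

lemma Lr_bound:
  assumes [measurable]: "psi \<in> borel_measurable mu" and S: "\<And>x. \<bar>psi x\<bar> \<le> S"
  shows "\<bar>Lr (Suc t) psi x\<bar> \<le> S * L1 (Suc t) x"
proof -
  have i1: "integrable mu (\<lambda>u. a (Suc t) x u * b (Suc t) u (y (Suc t)) * psi u)"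
    by (rule Lr_integrable[OF assms(1) S])
  have i2: "integrable mu (\<lambda>u. S * (a (Suc t) x u * b (Suc t) u (y (Suc t))))"
    using ab_integrable by simp
  have eq: "(\<integral>u. S * (a (Suc t) x u * b (Suc t) u (y (Suc t))) \<partial>mu) = S * L1 (Suc t) x"
    using Lr_one[of t x] unfolding Lr_def by simp
  have p: "\<And>u. a (Suc t) x u * b (Suc t) u (y (Suc t)) * psi u \<le> S * (a (Suc t) x u * b (Suc t) u (y (Suc t)))"
    "\<And>u. - (a (Suc t) x u * b (Suc t) u (y (Suc t)) * psi u) \<le> S * (a (Suc t) x u * b (Suc t) u (y (Suc t)))"
    using S absbound_aux by auto
  have "Lr (Suc t) psi x \<le> S * L1 (Suc t) x"
    unfolding Lr_def eq[symmetric] by (intro integral_mono i1 i2 p)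
  moreover have "- Lr (Suc t) psi x \<le> S * L1 (Suc t) x"
    unfolding Lr_def eq[symmetric] integral_minus[symmetric] by (intro integral_mono i1 i2 p integrable_minus)
  ultimately show ?thesis by linarith
qed


lemma F_step:
  assumes Fm[measurable]: "F t \<in> borel_measurable mu" and Fnn: "\<And>x. F t x \<ge> 0"
    and F1: "(\<integral>\<^sup>+ x. ennreal (F t x) \<partial>mu) = 1"
  shows "kappa mu a0 a b y (Suc t) = (\<integral>u. L1 (Suc t) u * F t u \<partial>mu)"
    and "kappa mu a0 a b y (Suc t) > 0"
    and "\<And>x. F (Suc t) x = b (Suc t) x (y (Suc t)) * (\<integral>u. F t u * a (Suc t) u x \<partial>mu) / kappa mu a0 a b y (Suc t)"
    and "F (Suc t) \<in> borel_measurable mu" "\<And>x. F (Suc t) x \<ge> 0"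
    and "(\<integral>\<^sup>+ x. ennreal (F (Suc t) x) \<partial>mu) = 1"
proof -
  define pred where "pred x = (\<integral>\<^sup>+ u. ennreal (F t u * a (Suc t) u x) \<partial>mu)" for x
  define num where "num x = ennreal (b (Suc t) x (y (Suc t))) * pred x" for x
  define kap where "kap = kappa mu a0 a b y (Suc t)"
  have Fsuc: "F (Suc t) = (\<lambda>x. enn2real (num x) / enn2real (\<integral>\<^sup>+ x'. num x' \<partial>mu))"
    by (simp add: num_def pred_def Let_def)
  have pred_m[measurable]: "pred \<in> borel_measurable mu" unfolding pred_def[abs_def] by measurable
  have num_m[measurable]: "num \<in> borel_measurable mu" unfolding num_def[abs_def] by measurable
  have "(\<integral>\<^sup>+ x. num x \<partial>mu) = (\<integral>\<^sup>+ x. \<integral>\<^sup>+ u. ennreal (F t u * a (Suc t) u x * b (Suc t) x (y (Suc t))) \<partial>mu \<partial>mu)"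
    unfolding num_def pred_def
    by (intro nn_integral_cong, subst nn_integral_cmult[symmetric])
       (auto intro!: nn_integral_cong simp: ennreal_mult'[symmetric] Fnn mult.commute)
  also have "\<dots> = (\<integral>\<^sup>+ u. \<integral>\<^sup>+ x. ennreal (F t u * a (Suc t) u x * b (Suc t) x (y (Suc t))) \<partial>mu \<partial>mu)"
    by (rule MM.Fubini') measurable
  also have "\<dots> = (\<integral>\<^sup>+ u. ennreal (F t u) * Lo (Suc t) u \<partial>mu)"
    unfolding Lone_def
    by (intro nn_integral_cong, subst nn_integral_cmult[symmetric])
       (auto intro!: nn_integral_cong simp: ennreal_mult'[symmetric] Fnn mult.assoc)
  also have "\<dots> = (\<integral>\<^sup>+ u. ennreal (L1 (Suc t) u * F t u) \<partial>mu)"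
    by (intro nn_integral_cong) (simp add: Lone_eq ennreal_mult'[symmetric] Fnn mult.commute)
  finally have numint: "(\<integral>\<^sup>+ x. num x \<partial>mu) = (\<integral>\<^sup>+ u. ennreal (L1 (Suc t) u * F t u) \<partial>mu)" .
  have kapint: "kap = (\<integral>u. L1 (Suc t) u * F t u \<partial>mu)"
    unfolding kap_def kappa_def
    by (subst integral_eq_nn_integral)
       (auto intro!: arg_cong[where f=enn2real] nn_integral_cong simp: Lone_eq ennreal_mult'[symmetric] Fnn L1_pos less_imp_le)
  have L1nn: "0 \<le> L1 (Suc t) u" for u using L1_pos[of t u] by simp
  have fin: "(\<integral>\<^sup>+ u. ennreal (L1 (Suc t) u * F t u) \<partial>mu) \<le> ennreal (gamma mu a b y (Suc t))"
  proof -
    have "(\<integral>\<^sup>+ u. ennreal (L1 (Suc t) u * F t u) \<partial>mu) \<le> (\<integral>\<^sup>+ u. ennreal (gamma mu a b y (Suc t) * F t u) \<partial>mu)"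
      by (intro nn_integral_mono ennreal_leI mult_right_mono L1_le_gamma Fnn)
    also have "\<dots> = (\<integral>\<^sup>+ u. ennreal (gamma mu a b y (Suc t)) * ennreal (F t u) \<partial>mu)"
      using gamma_pos[of t] by (intro nn_integral_cong) (simp add: ennreal_mult')
    also have "\<dots> = ennreal (gamma mu a b y (Suc t))" by (subst nn_integral_cmult) (auto simp: F1)
    finally show ?thesis .
  qed
  have pos: "(\<integral>\<^sup>+ u. ennreal (L1 (Suc t) u * F t u) \<partial>mu) \<noteq> 0"
  proof
    assume "(\<integral>\<^sup>+ u. ennreal (L1 (Suc t) u * F t u) \<partial>mu) = 0"
    then have "AE u in mu. ennreal (L1 (Suc t) u * F t u) = 0"
      by (subst (asm) nn_integral_0_iff_AE) auto
    then have "AE u in mu. ennreal (F t u) = 0"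
    proof eventually_elim
      case (elim u)
      then have "L1 (Suc t) u * F t u \<le> 0" by (simp add: ennreal_eq_0_iff)
      then have "F t u \<le> 0" using L1_pos[of t u] by (simp add: mult_le_0_iff)
      then show ?case by (simp add: ennreal_eq_0_iff)
    qed
    then have "(\<integral>\<^sup>+ u. ennreal (F t u) \<partial>mu) = 0"
      by (subst nn_integral_0_iff_AE) auto
    with F1 show False by simp
  qed
  have intLF: "integrable mu (\<lambda>u. L1 (Suc t) u * F t u)"
  proof (rule integrableI_bounded)
    have "(\<integral>\<^sup>+ u. ennreal (norm (L1 (Suc t) u * F t u)) \<partial>mu) = (\<integral>\<^sup>+ u. ennreal (L1 (Suc t) u * F t u) \<partial>mu)"
      using Fnn L1nn by (intro nn_integral_cong) simp
    also have "\<dots> < \<infinity>" using fin by (simp add: le_less_trans)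
    finally show "(\<integral>\<^sup>+ u. ennreal (norm (L1 (Suc t) u * F t u)) \<partial>mu) < \<infinity>" .
  qed measurable
  have kapeq: "(\<integral>\<^sup>+ u. ennreal (L1 (Suc t) u * F t u) \<partial>mu) = ennreal kap"
    unfolding kapint using Fnn L1nn by (subst nn_integral_eq_integral[OF intLF]) auto
  show "kappa mu a0 a b y (Suc t) = (\<integral>u. L1 (Suc t) u * F t u \<partial>mu)" using kapint kap_def by simp
  have kpos: "kap > 0" using pos kapeq by (auto simp: ennreal_eq_0_iff)
  then show "kappa mu a0 a b y (Suc t) > 0" by (simp add: kap_def)
  have Fsuc': "F (Suc t) x = enn2real (num x) / kap" for x
    unfolding Fsuc using numint kapeq kpos by simp
  have "enn2real (pred x) = (\<integral>u. F t u * a (Suc t) u x \<partial>mu)" for x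
    unfolding pred_def by (subst integral_eq_nn_integral) (auto simp: Fnn)
  then show "F (Suc t) x = b (Suc t) x (y (Suc t)) * (\<integral>u. F t u * a (Suc t) u x \<partial>mu) / kappa mu a0 a b y (Suc t)" for x
    unfolding Fsuc' num_def kap_def by (simp add: enn2real_mult)
  show Fm': "F (Suc t) \<in> borel_measurable mu" unfolding Fsuc'[abs_def] by measurable
  show Fnn': "F (Suc t) x \<ge> 0" for x unfolding Fsuc' using kpos by simp
  have "AE x in mu. num x \<noteq> \<infinity>"
    by (rule nn_integral_PInf_AE) (auto simp: numint kapeq)
  then have "(\<integral>\<^sup>+ x. ennreal (F (Suc t) x) \<partial>mu) = (\<integral>\<^sup>+ x. ennreal (1 / kap) * num x \<partial>mu)"
  proof (intro nn_integral_cong_AE, eventually_elim)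
    case (elim x)
    have "ennreal (F (Suc t) x) = ennreal (1 / kap * enn2real (num x))" unfolding Fsuc' by simp
    also have "\<dots> = ennreal (1 / kap) * num x"
      using kpos elim by (subst ennreal_mult) (auto simp: ennreal_enn2real less_top)
    finally show ?case .
  qed
  also have "\<dots> = ennreal (1 / kap) * ennreal kap"
    by (subst nn_integral_cmult) (auto simp: numint kapeq)
  also have "\<dots> = 1" using kpos by (subst ennreal_mult[symmetric]) auto
  finally show "(\<integral>\<^sup>+ x. ennreal (F (Suc t) x) \<partial>mu) = 1" .
qed

lemma F_props: "F t \<in> borel_measurable mu \<and> (\<forall>x. F t x \<ge> 0) \<and> (\<integral>\<^sup>+ x. ennreal (F t x) \<partial>mu) = 1"
proof (induction t)
  case 0
  then show ?case using a0 by simp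
next
  case (Suc t)
  then show ?case using F_step(4-6)[of t] by blast
qed

lemma F_meas[measurable]: "F t \<in> borel_measurable mu" using F_props by blast
lemma F_nn[simp]: "F t x \<ge> 0" using F_props by blast
lemma F_one: "(\<integral>\<^sup>+ x. ennreal (F t x) \<partial>mu) = 1" using F_props by blast

lemma kappa_eq: "kappa mu a0 a b y (Suc t) = (\<integral>u. L1 (Suc t) u * F t u \<partial>mu)"
  using F_step(1) F_props by blast
lemma kappa_pos: "kappa mu a0 a b y (Suc t) > 0"
  using F_step(2) F_props by blast
lemma F_Suc: "F (Suc t) x = b (Suc t) x (y (Suc t)) * (\<integral>u. F t u * a (Suc t) u x \<partial>mu) / kappa mu a0 a b y (Suc t)"
  using F_step(3) F_props by blast

lemma F_integrable:
  assumes [measurable]: "psi \<in> borel_measurable mu" and S: "\<And>x. \<bar>psi x\<bar> \<le> S"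
  shows "integrable mu (\<lambda>x. psi x * F t x)"
proof (rule Bochner_Integration.integrable_bound)
  show "integrable mu (\<lambda>x. S * F t x)"
    by (intro integrable_mult_right integrableI_nn_integral_finite[where x=1]) (auto simp: F_one)
  show "AE x in mu. norm (psi x * F t x) \<le> norm (S * F t x)"
    using absbound_aux(3)[of "F t x" "psi x" S for x] S by (auto simp: mult.commute)
qed measurable


lemma mfilt_Suc:
  assumes [measurable]: "psi \<in> borel_measurable mu" and S: "\<And>x. \<bar>psi x\<bar> \<le> S"
  shows "mfilt mu a0 a b y (Suc t) psi = mfilt mu a0 a b y t (Lr (Suc t) psi) / kappa mu a0 a b y (Suc t)"
proof -
  define k where "k = kappa mu a0 a b y (Suc t)"
  define g where "g = gamma mu a b y (Suc t)"
  define f where "f u x = psi x * b (Suc t) x (y (Suc t)) * (F t u * a (Suc t) u x)" for u x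
  have S0: "0 \<le> S" using S[of undefined] by simp
  have fm[measurable]: "(\<lambda>(u, x). f u x) \<in> borel_measurable (mu \<Otimes>\<^sub>M mu)" unfolding f_def by measurable
  have inner: "(\<integral>\<^sup>+ x. ennreal (norm (f u x)) \<partial>mu) \<le> ennreal (S * F t u) * ennreal g" for u
  proof -
    have "(\<integral>\<^sup>+ x. ennreal (norm (f u x)) \<partial>mu) \<le> (\<integral>\<^sup>+ x. ennreal (S * F t u) * ennreal (a (Suc t) u x * b (Suc t) x (y (Suc t))) \<partial>mu)"
    proof (intro nn_integral_mono)
      fix x
      have "norm (f u x) = \<bar>psi x\<bar> * (F t u * a (Suc t) u x * b (Suc t) x (y (Suc t)))"
        unfolding f_def by (simp add: abs_mult)
      also have "\<dots> \<le> S * (F t u * a (Suc t) u x * b (Suc t) x (y (Suc t)))"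
        by (intro mult_right_mono S) simp
      finally show "ennreal (norm (f u x)) \<le> ennreal (S * F t u) * ennreal (a (Suc t) u x * b (Suc t) x (y (Suc t)))"
        using S0 by (subst ennreal_mult[symmetric]) (auto intro!: ennreal_leI simp: mult_ac)
    qed
    also have "\<dots> = ennreal (S * F t u) * Lo (Suc t) u"
      unfolding Lone_def by (subst nn_integral_cmult) auto
    also have "\<dots> \<le> ennreal (S * F t u) * ennreal g"
      unfolding g_def gamma_eq by (intro mult_left_mono Lone_le_SUP) auto
    finally show ?thesis .
  qed
  have intf: "integrable (mu \<Otimes>\<^sub>M mu) (\<lambda>(u, x). f u x)"
  proof (rule integrableI_bounded)
    have "(\<integral>\<^sup>+ p. ennreal (norm ((\<lambda>(u, x). f u x) p)) \<partial>(mu \<Otimes>\<^sub>M mu))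
        = (\<integral>\<^sup>+ u. \<integral>\<^sup>+ x. ennreal (norm (f u x)) \<partial>mu \<partial>mu)"
      by (subst M.nn_integral_fst[symmetric]) auto
    also have "\<dots> \<le> (\<integral>\<^sup>+ u. ennreal (S * g) * ennreal (F t u) \<partial>mu)"
      using inner S0 gamma_pos[of t]
      by (intro nn_integral_mono) (auto simp: g_def ennreal_mult'[symmetric] mult_ac)
    also have "\<dots> = ennreal (S * g)" by (subst nn_integral_cmult) (auto simp: F_one)
    finally show "(\<integral>\<^sup>+ p. ennreal (norm ((\<lambda>(u, x). f u x) p)) \<partial>(mu \<Otimes>\<^sub>M mu)) < \<infinity>"
      by (simp add: le_less_trans)
  qed measurable
  have fx: "(\<integral>u. f u x \<partial>mu) = psi x * b (Suc t) x (y (Suc t)) * (\<integral>u. F t u * a (Suc t) u x \<partial>mu)" for x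
    unfolding f_def by (rule integral_mult_right_zero)
  have "mfilt mu a0 a b y (Suc t) psi = (\<integral>x. (1 / k) * (\<integral>u. f u x \<partial>mu) \<partial>mu)"
    unfolding mfilt_def fx k_def
    by (intro Bochner_Integration.integral_cong refl) (simp add: F_Suc del: filt.simps)
  also have "\<dots> = (1 / k) * (\<integral>x. (\<integral>u. f u x \<partial>mu) \<partial>mu)" by simp
  also have "(\<integral>x. (\<integral>u. f u x \<partial>mu) \<partial>mu) = (\<integral>u. (\<integral>x. f u x \<partial>mu) \<partial>mu)"
    by (rule MM.Fubini_integral[OF intf])
  also have "\<dots> = (\<integral>u. Lr (Suc t) psi u * F t u \<partial>mu)"
    unfolding f_def Lr_def
    by (intro Bochner_Integration.integral_cong refl)
       (simp add: integral_mult_right_zero[symmetric] mult_ac del: integral_mult_right_zero)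
  finally show ?thesis unfolding mfilt_def k_def by simp
qed


lemma sumL1_pos: "(N::nat) \<ge> 1 \<Longrightarrow> (\<Sum>i<N. L1 (Suc t) (xs i)) > 0"
  by (intro sum_pos L1_pos) (auto simp: lessThan_empty_iff)

lemma pf_eq:
  assumes N: "(N::nat) \<ge> 1"
  shows "pf_dens mu a b y N (Suc t) xs x =
     b (Suc t) x (y (Suc t)) * (\<Sum>i<N. a (Suc t) (xs i) x) / (\<Sum>i<N. L1 (Suc t) (xs i))"
proof -
  define h where "h x = b (Suc t) x (y (Suc t)) * ((1 / real N) * (\<Sum>i<N. a (Suc t) (xs i) x))" for x
  have hnn: "h x \<ge> 0" for x unfolding h_def by (intro mult_nonneg_nonneg sum_nonneg) auto
  have "(\<integral>x. h x \<partial>mu) = (1 / real N) * (\<Sum>i<N. \<integral>x. a (Suc t) (xs i) x * b (Suc t) x (y (Suc t)) \<partial>mu)"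
    unfolding h_def
    by (simp add: sum_distrib_left sum_distrib_right Bochner_Integration.integral_sum ab_integrable mult_ac
          del: integral_sum')
  also have "\<dots> = (1 / real N) * (\<Sum>i<N. L1 (Suc t) (xs i))"
    using Lr_one[of t] unfolding Lr_def by simp
  finally have hint: "(\<integral>x. h x \<partial>mu) = (1 / real N) * (\<Sum>i<N. L1 (Suc t) (xs i))" .
  have "pf_dens mu a b y N (Suc t) xs x = h x / enn2real (\<integral>\<^sup>+ x'. ennreal (h x') \<partial>mu)"
    unfolding pf_dens_def Let_def h_def[symmetric] using hnn by simp
  also have "enn2real (\<integral>\<^sup>+ x'. ennreal (h x') \<partial>mu) = (\<integral>x. h x \<partial>mu)"
  proof (subst integral_eq_nn_integral)
    show "h \<in> borel_measurable mu" unfolding h_def[abs_def] by measurable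
  qed (use hnn in auto)
  also have "\<dots> = (1 / real N) * (\<Sum>i<N. L1 (Suc t) (xs i))" by (rule hint)
  finally show ?thesis unfolding h_def using N by (simp add: field_simps)
qed


lemma pf_eq2:
  assumes N: "(N::nat) \<ge> 1"
  shows "pf_dens mu a b y N (Suc t) xs x =
     (\<Sum>i<N. a (Suc t) (xs i) x * b (Suc t) x (y (Suc t))) / (\<Sum>i<N. L1 (Suc t) (xs i))"
  unfolding pf_eq[OF N] by (simp add: sum_distrib_left mult.commute)

lemma pf_nn: "(N::nat) \<ge> 1 \<Longrightarrow> pf_dens mu a b y N (Suc t) xs x \<ge> 0"
  unfolding pf_eq2 using sumL1_pos[of N t xs] by (intro divide_nonneg_pos sum_nonneg) auto

lemma pf_meas:
  assumes N: "(N::nat) \<ge> 1"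
  shows "(\<lambda>(xs, x). pf_dens mu a b y N (Suc t) xs x) \<in> borel_measurable (PiM {..<N} (\<lambda>_. mu) \<Otimes>\<^sub>M mu)"
  unfolding pf_eq2[OF N] by measurable

lemma pf_meas1[measurable]:
  assumes N: "(N::nat) \<ge> 1"
  shows "pf_dens mu a b y N (Suc t) xs \<in> borel_measurable mu"
  unfolding pf_eq2[OF N] by measurable

lemma pf_integrable:
  assumes N: "(N::nat) \<ge> 1" and [measurable]: "psi \<in> borel_measurable mu" and S: "\<And>x. \<bar>psi x\<bar> \<le> S"
  shows "integrable mu (\<lambda>x. psi x * pf_dens mu a b y N (Suc t) xs x)"
    and "(\<integral>x. psi x * pf_dens mu a b y N (Suc t) xs x \<partial>mu) =
          (\<Sum>i<N. Lr (Suc t) psi (xs i)) / (\<Sum>i<N. L1 (Suc t) (xs i))"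
proof -
  have eq: "psi x * pf_dens mu a b y N (Suc t) xs x =
     (\<Sum>i<N. a (Suc t) (xs i) x * b (Suc t) x (y (Suc t)) * psi x) / (\<Sum>i<N. L1 (Suc t) (xs i))" for x
    unfolding pf_eq2[OF N] by (simp add: sum_distrib_left mult_ac)
  have ints: "integrable mu (\<lambda>x. a (Suc t) (xs i) x * b (Suc t) x (y (Suc t)) * psi x)" for i
    by (rule Lr_integrable[OF _ S]) simp
  show "integrable mu (\<lambda>x. psi x * pf_dens mu a b y N (Suc t) xs x)"
    unfolding eq by (intro integrable_divide Bochner_Integration.integrable_sum ints)
  show "(\<integral>x. psi x * pf_dens mu a b y N (Suc t) xs x \<partial>mu) =
          (\<Sum>i<N. Lr (Suc t) psi (xs i)) / (\<Sum>i<N. L1 (Suc t) (xs i))"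
    unfolding eq Lr_def
    by (simp add: Bochner_Integration.integral_sum ints del: integral_sum')
qed

lemma pf_one:
  assumes N: "(N::nat) \<ge> 1"
  shows "(\<integral>\<^sup>+ x. ennreal (pf_dens mu a b y N (Suc t) xs x) \<partial>mu) = 1"
proof -
  have "(\<integral>x. 1 * pf_dens mu a b y N (Suc t) xs x \<partial>mu) = 1"
    using pf_integrable(2)[OF N, of "\<lambda>_. 1" 1 t xs] sumL1_pos[OF N, of t xs]
    by (simp add: Lr_one)
  moreover have "integrable mu (\<lambda>x. 1 * pf_dens mu a b y N (Suc t) xs x)"
    using pf_integrable(1)[OF N, of "\<lambda>_. 1" 1 t xs] by simp
  ultimately show ?thesis
    using pf_nn[OF N] by (subst nn_integral_eq_integral) auto
qed


abbreviation "PS N \<equiv> PiM {..<N} (\<lambda>_::nat. mu)"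
abbreviation "K N t xs \<equiv> PiM {..<N} (\<lambda>_::nat. density mu (\<lambda>x. ennreal (pf_dens mu a b y N t xs x)))"
abbreviation "PT N T \<equiv> particles mu a0 a b y N T"

lemma kern: "(N::nat) \<ge> 1 \<Longrightarrow> K N (Suc t) \<in> PS N \<rightarrow>\<^sub>M prob_algebra (PS N)"
  by (rule kernel_meas[OF mu(2) pf_meas pf_nn pf_one]) auto

lemma PT_space: "(N::nat) \<ge> 1 \<Longrightarrow> PT N T \<in> space (prob_algebra (PS N))"
proof (induction T)
  case 0
  have "prob_space (PT N 0)"
    using a0 by (simp, intro prob_space_PiM prob_density) auto
  moreover have "sets (PT N 0) = sets (PS N)" by (simp, intro sets_PiM_cong) auto
  ultimately show ?case by (simp add: space_prob_algebra)
next
  case (Suc T)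
  have "prob_space (PT N (Suc T))"
    using Suc kern[OF Suc.prems, of T] by (simp only: particles.simps, intro prob_space_bind') auto
  moreover have "sets (PT N (Suc T)) = sets (PS N)"
    using Suc kern[OF Suc.prems, of T] by (simp only: particles.simps, intro sets_bind') auto
  ultimately show ?case by (simp add: space_prob_algebra)
qed

lemma PT_prob: "(N::nat) \<ge> 1 \<Longrightarrow> prob_space (PT N T)"
  using PT_space by (simp add: space_prob_algebra)
lemma PT_sets: "(N::nat) \<ge> 1 \<Longrightarrow> sets (PT N T) = sets (PS N)"
  using PT_space by (simp add: space_prob_algebra)
lemma PT_spc: "(N::nat) \<ge> 1 \<Longrightarrow> space (PT N T) = space (PS N)"
  using PT_sets by (rule sets_eq_imp_space_eq)


abbreviation "bet \<equiv> beta (gamma mu a b y) (kappa mu a0 a b y)"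

definition Claim where "Claim N T \<longleftrightarrow> (\<forall>psi S \<epsilon>. psi \<in> borel_measurable mu \<longrightarrow> (\<forall>x. \<bar>psi x\<bar> \<le> S) \<longrightarrow> S > 0 \<longrightarrow> \<epsilon> > 0 \<longrightarrow>
   measure (PT N T) {xs \<in> space (PT N T). \<bar>(\<Sum>i<N. psi (xs i)) / real N - mfilt mu a0 a b y T psi\<bar> > \<epsilon>}
     \<le> alpha T * exp (- (real N * \<epsilon>\<^sup>2) / (bet T * S\<^sup>2)))"

lemma alpha_ge: "alpha T \<ge> 2" by (induction T) auto
lemma beta_ge: "bet T \<ge> 2" by (induction T) auto

lemma ratio:
  assumes N: "(N::nat) \<ge> 1" and IH: "Claim N t"
    and psim[measurable]: "psi \<in> borel_measurable mu" and S: "\<And>x. \<bar>psi x\<bar> \<le> S" and S0: "S > 0" and d: "d > 0"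
  shows "measure (PT N t) {xs \<in> space (PT N t).
      \<bar>(\<Sum>i<N. Lr (Suc t) psi (xs i)) / (\<Sum>i<N. L1 (Suc t) (xs i)) - mfilt mu a0 a b y (Suc t) psi\<bar> > d}
    \<le> 2 * alpha t * exp (- (real N * d\<^sup>2) / ((4 * bet t * (gamma mu a b y (Suc t))\<^sup>2 / (kappa mu a0 a b y (Suc t))\<^sup>2) * S\<^sup>2))"
proof -
  interpret P: prob_space "PT N t" by (rule PT_prob[OF N])
  define g where "g = gamma mu a b y (Suc t)"
  define B where "B = kappa mu a0 a b y (Suc t)"
  define A where "A = mfilt mu a0 a b y t (Lr (Suc t) psi)"
  define AN where "AN xs = (\<Sum>i<N. Lr (Suc t) psi (xs i)) / real N" for xs :: "nat \<Rightarrow> 'a"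
  define BN where "BN xs = (\<Sum>i<N. L1 (Suc t) (xs i)) / real N" for xs :: "nat \<Rightarrow> 'a"
  define E where "E = exp (- (real N * d\<^sup>2) / ((4 * bet t * g\<^sup>2 / B\<^sup>2) * S\<^sup>2))"
  have g0: "g > 0" unfolding g_def by (rule gamma_pos)
  have B0: "B > 0" unfolding B_def by (rule kappa_pos)
  have bt0: "bet t > 0" using beta_ge[of t] by simp
  have N0: "real N > 0" using N by simp
  have Bm: "B = mfilt mu a0 a b y t (L1 (Suc t))" unfolding B_def kappa_eq mfilt_def ..
  have m: "mfilt mu a0 a b y (Suc t) psi = A / B" unfolding A_def B_def by (rule mfilt_Suc[OF psim S])
  have Q: "(\<Sum>i<N. Lr (Suc t) psi (xs i)) / (\<Sum>i<N. L1 (Suc t) (xs i)) = AN xs / BN xs" for xs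
    unfolding AN_def BN_def using N0 by simp
  have BNpos: "BN xs > 0" for xs unfolding BN_def using sumL1_pos[OF N] N0 by simp
  have ANb: "\<bar>AN xs\<bar> \<le> S * BN xs" for xs
  proof -
    have "\<bar>\<Sum>i<N. Lr (Suc t) psi (xs i)\<bar> \<le> (\<Sum>i<N. S * L1 (Suc t) (xs i))"
      by (rule order_trans[OF sum_abs sum_mono]) (rule Lr_bound[OF psim S])
    then show ?thesis unfolding AN_def BN_def using N0
      by (simp add: sum_distrib_left[symmetric] abs_div divide_le_eq)
  qed
  have inst: "\<And>psi S \<epsilon>. psi \<in> borel_measurable mu \<Longrightarrow> (\<forall>x. \<bar>psi x\<bar> \<le> S) \<Longrightarrow> S > 0 \<Longrightarrow> \<epsilon> > 0 \<Longrightarrow>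
   measure (PT N t) {xs \<in> space (PT N t). \<bar>(\<Sum>i<N. psi (xs i)) / real N - mfilt mu a0 a b y t psi\<bar> > \<epsilon>}
     \<le> alpha t * exp (- (real N * \<epsilon>\<^sup>2) / (bet t * S\<^sup>2))"
    using IH unfolding Claim_def by blast
  have b1: "\<forall>x. \<bar>Lr (Suc t) psi x\<bar> \<le> S * g"
  proof
    fix x
    have "S * L1 (Suc t) x \<le> S * g" unfolding g_def using S0 by (intro mult_left_mono L1_le_gamma) auto
    then show "\<bar>Lr (Suc t) psi x\<bar> \<le> S * g" using Lr_bound[OF psim S, of t x] by linarith
  qed
  have b2: "\<forall>x. \<bar>L1 (Suc t) x\<bar> \<le> g"
    using L1_le_gamma[of t] L1_pos[of t] unfolding g_def by (simp add: less_imp_le)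
  define C1 where "C1 = {xs \<in> space (PT N t). \<bar>(\<Sum>i<N. Lr (Suc t) psi (xs i)) / real N - mfilt mu a0 a b y t (Lr (Suc t) psi)\<bar> > d * B / 2}"
  define C2 where "C2 = {xs \<in> space (PT N t). \<bar>(\<Sum>i<N. L1 (Suc t) (xs i)) / real N - mfilt mu a0 a b y t (L1 (Suc t))\<bar> > d * B / (2 * S)}"
  have C1m: "C1 \<in> P.events" unfolding C1_def PT_sets[OF N] PT_spc[OF N] by measurable
  have C2m: "C2 \<in> P.events" unfolding C2_def PT_sets[OF N] PT_spc[OF N] by measurable
  have "measure (PT N t) {xs \<in> space (PT N t).
      \<bar>(\<Sum>i<N. Lr (Suc t) psi (xs i)) / (\<Sum>i<N. L1 (Suc t) (xs i)) - mfilt mu a0 a b y (Suc t) psi\<bar> > d}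
      \<le> measure (PT N t) (C1 \<union> C2)"
  proof (rule P.finite_measure_mono)
    show "C1 \<union> C2 \<in> P.events" using C1m C2m by auto
    show "{xs \<in> space (PT N t).
      \<bar>(\<Sum>i<N. Lr (Suc t) psi (xs i)) / (\<Sum>i<N. L1 (Suc t) (xs i)) - mfilt mu a0 a b y (Suc t) psi\<bar> > d}
      \<subseteq> C1 \<union> C2"
    proof safe
      fix xs assume xs: "xs \<in> space (PT N t)" and gt: "d < \<bar>(\<Sum>i<N. Lr (Suc t) psi (xs i)) / (\<Sum>i<N. L1 (Suc t) (xs i)) - mfilt mu a0 a b y (Suc t) psi\<bar>"
        and n2: "xs \<notin> C2"
      have "\<bar>BN xs - B\<bar> \<le> d * B / (2 * S)" using n2 xs unfolding C2_def BN_def Bm by auto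
      moreover have "\<not> \<bar>AN xs - A\<bar> \<le> d * B / 2"
      proof
        assume a1: "\<bar>AN xs - A\<bar> \<le> d * B / 2"
        have "\<bar>AN xs / BN xs - A / B\<bar> \<le> d"
          using a1 calculation by (rule ratio_aux[OF B0 BNpos ANb S0])
        with gt show False unfolding Q m by simp
      qed
      ultimately show "xs \<in> C1" using xs unfolding C1_def AN_def A_def by auto
    qed
  qed
  also have "\<dots> \<le> measure (PT N t) C1 + measure (PT N t) C2" by (rule measure_Un_le[OF C1m C2m])
  also have "measure (PT N t) C1 \<le> alpha t * E"
  proof -
    have "measure (PT N t) C1 \<le> alpha t * exp (- (real N * (d * B / 2)\<^sup>2) / (bet t * (S * g)\<^sup>2))"
      unfolding C1_def by (rule inst[OF Lr_meas[OF psim] b1]) (use S0 g0 d B0 in simp_all)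
    also have "- (real N * (d * B / 2)\<^sup>2) / (bet t * (S * g)\<^sup>2) = - (real N * d\<^sup>2) / ((4 * bet t * g\<^sup>2 / B\<^sup>2) * S\<^sup>2)"
      using B0 g0 S0 bt0 by (simp add: field_simps power2_eq_square)
    finally show ?thesis unfolding E_def .
  qed
  also have "measure (PT N t) C2 \<le> alpha t * E"
  proof -
    have "measure (PT N t) C2 \<le> alpha t * exp (- (real N * (d * B / (2 * S))\<^sup>2) / (bet t * g\<^sup>2))"
      unfolding C2_def by (rule inst[OF L1_meas b2]) (use S0 g0 d B0 in simp_all)
    also have "- (real N * (d * B / (2 * S))\<^sup>2) / (bet t * g\<^sup>2) = - (real N * d\<^sup>2) / ((4 * bet t * g\<^sup>2 / B\<^sup>2) * S\<^sup>2)"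
      using B0 g0 S0 bt0 by (simp add: field_simps power2_eq_square)
    finally show ?thesis unfolding E_def .
  qed
  finally show ?thesis unfolding E_def g_def B_def by simp
qed


lemma beta_Suc_ge:
  "8 \<le> bet (Suc t)" "4 * bet t * (gamma mu a b y (Suc t))\<^sup>2 / (kappa mu a0 a b y (Suc t))\<^sup>2 \<le> bet (Suc t)"
  "4 * (4 * bet t * (gamma mu a b y (Suc t))\<^sup>2 / (kappa mu a0 a b y (Suc t))\<^sup>2) \<le> bet (Suc t)"
proof -
  have "0 \<le> bet t * (gamma mu a b y (Suc t))\<^sup>2 / (kappa mu a0 a b y (Suc t))\<^sup>2"
    using beta_ge[of t] by simp
  then show "8 \<le> bet (Suc t)" "4 * bet t * (gamma mu a b y (Suc t))\<^sup>2 / (kappa mu a0 a b y (Suc t))\<^sup>2 \<le> bet (Suc t)"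
  "4 * (4 * bet t * (gamma mu a b y (Suc t))\<^sup>2 / (kappa mu a0 a b y (Suc t))\<^sup>2) \<le> bet (Suc t)"
    by auto
qed

lemma Dpos: "4 * bet t * (gamma mu a b y (Suc t))\<^sup>2 / (kappa mu a0 a b y (Suc t))\<^sup>2 > 0"
  using beta_ge[of t] gamma_pos[of t] kappa_pos[of t] by simp

lemma second:
  assumes N: "(N::nat) \<ge> 1" and IH: "Claim N t"
    and psim[measurable]: "psi \<in> borel_measurable mu" and S: "\<And>x. \<bar>psi x\<bar> \<le> S" and S0: "S > 0" and e: "\<epsilon> > 0"
  shows "measure (PT N t) {xs \<in> space (PT N t).
      \<bar>(\<integral>x. psi x * (pf_dens mu a b y N (Suc t) xs x - F (Suc t) x) \<partial>mu)\<bar> > \<epsilon>}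
    \<le> alpha (Suc t) * exp (- (real N * \<epsilon>\<^sup>2) / (bet (Suc t) * S\<^sup>2))"
proof -
  define D where "D = 4 * bet t * (gamma mu a b y (Suc t))\<^sup>2 / (kappa mu a0 a b y (Suc t))\<^sup>2"
  have eq: "(\<integral>x. psi x * (pf_dens mu a b y N (Suc t) xs x - F (Suc t) x) \<partial>mu) =
      (\<Sum>i<N. Lr (Suc t) psi (xs i)) / (\<Sum>i<N. L1 (Suc t) (xs i)) - mfilt mu a0 a b y (Suc t) psi" for xs
  proof -
    have "(\<integral>x. psi x * (pf_dens mu a b y N (Suc t) xs x - F (Suc t) x) \<partial>mu) =
      (\<integral>x. psi x * pf_dens mu a b y N (Suc t) xs x - psi x * F (Suc t) x \<partial>mu)"
      by (simp add: right_diff_distrib)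
    also have "\<dots> = (\<integral>x. psi x * pf_dens mu a b y N (Suc t) xs x \<partial>mu) - (\<integral>x. psi x * F (Suc t) x \<partial>mu)"
      by (rule Bochner_Integration.integral_diff[OF pf_integrable(1)[OF N psim S] F_integrable[OF psim S]])
    finally show ?thesis unfolding pf_integrable(2)[OF N psim S] mfilt_def .
  qed
  have "measure (PT N t) {xs \<in> space (PT N t).
      \<bar>(\<integral>x. psi x * (pf_dens mu a b y N (Suc t) xs x - F (Suc t) x) \<partial>mu)\<bar> > \<epsilon>}
    \<le> 2 * alpha t * exp (- (real N * \<epsilon>\<^sup>2) / (D * S\<^sup>2))"
    unfolding eq D_def by (rule ratio[OF N IH psim S S0 e])
  also have "\<dots> \<le> alpha (Suc t) * exp (- (real N * \<epsilon>\<^sup>2) / (bet (Suc t) * S\<^sup>2))"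
  proof (rule mult_mono)
    show "2 * alpha t \<le> alpha (Suc t)" using alpha_ge[of t] by simp
    show "exp (- (real N * \<epsilon>\<^sup>2) / (D * S\<^sup>2)) \<le> exp (- (real N * \<epsilon>\<^sup>2) / (bet (Suc t) * S\<^sup>2))"
    proof (rule exp_aux)
      have D0: "D > 0" unfolding D_def by (rule Dpos)
      show "0 < D * S\<^sup>2" using D0 S0 by simp
      have "D \<le> bet (Suc t)" unfolding D_def by (rule beta_Suc_ge(2))
      then show "D * S\<^sup>2 \<le> bet (Suc t) * S\<^sup>2" by (rule mult_right_mono) simp
    qed simp
  qed (use alpha_ge[of "Suc t"] in auto)
  finally show ?thesis .
qed


lemma claim0: "(N::nat) \<ge> 1 \<Longrightarrow> Claim N 0"
  unfolding Claim_def
proof (intro allI impI)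
  fix psi :: "'a \<Rightarrow> real" and S \<epsilon> :: real assume N: "N \<ge> 1" and psim: "psi \<in> borel_measurable mu" and S: "\<forall>x. \<bar>psi x\<bar> \<le> S"
    and S0: "S > 0" and e: "\<epsilon> > 0"
  have "measure (PT N 0) {xs \<in> space (PT N 0). \<bar>(\<Sum>i<N. psi (xs i)) / real N - mfilt mu a0 a b y 0 psi\<bar> > \<epsilon>}
     \<le> 2 * exp (- (real N * \<epsilon>\<^sup>2) / (2 * S\<^sup>2))"
    unfolding particles.simps mfilt_def filt.simps
    by (rule hoeffding_prod[OF a0(1) _ a0(3) psim _ S0 N e]) (use a0(2) S in auto)
  then show "measure (PT N 0) {xs \<in> space (PT N 0). \<bar>(\<Sum>i<N. psi (xs i)) / real N - mfilt mu a0 a b y 0 psi\<bar> > \<epsilon>}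
     \<le> alpha 0 * exp (- (real N * \<epsilon>\<^sup>2) / (bet 0 * S\<^sup>2))" by simp
qed

lemma claim_Suc:
  assumes N: "(N::nat) \<ge> 1" and IH: "Claim N t"
  shows "Claim N (Suc t)"
  unfolding Claim_def
proof (intro allI impI)
  fix psi :: "'a \<Rightarrow> real" and S \<epsilon> :: real assume psim[measurable]: "psi \<in> borel_measurable mu" and S': "\<forall>x. \<bar>psi x\<bar> \<le> S"
    and S0: "S > 0" and e: "\<epsilon> > 0"
  have S: "\<And>x. \<bar>psi x\<bar> \<le> S" using S' by blast
  interpret P: prob_space "PT N t" by (rule PT_prob[OF N])
  interpret P': prob_space "PT N (Suc t)" by (rule PT_prob[OF N])
  define m where "m = mfilt mu a0 a b y (Suc t) psi"
  define Q where "Q xs = (\<Sum>i<N. Lr (Suc t) psi (xs i)) / (\<Sum>i<N. L1 (Suc t) (xs i))" for xs :: "nat \<Rightarrow> 'a"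
  define A where "A = {z \<in> space (PT N (Suc t)). \<bar>(\<Sum>i<N. psi (z i)) / real N - m\<bar> > \<epsilon>}"
  define C where "C = {xs \<in> space (PT N t). \<bar>Q xs - m\<bar> > \<epsilon> / 2}"
  define e1 where "e1 = 2 * exp (- (real N * (\<epsilon> / 2)\<^sup>2) / (2 * S\<^sup>2))"
  have Am: "A \<in> sets (PS N)" unfolding A_def PT_spc[OF N] by measurable
  have Cm: "C \<in> sets (PT N t)" unfolding C_def Q_def PT_sets[OF N] PT_spc[OF N] by measurable
  have "emeasure (PT N (Suc t)) A = (\<integral>\<^sup>+xs. emeasure (K N (Suc t) xs) A \<partial>PT N t)"
    unfolding particles.simps(2) by (rule emeasure_bind_prob_algebra[OF PT_space[OF N] kern[OF N] Am])
  also have "\<dots> \<le> (\<integral>\<^sup>+xs. ennreal e1 + indicator C xs \<partial>PT N t)"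
  proof (rule nn_integral_mono)
    fix xs assume xs: "xs \<in> space (PT N t)"
    interpret Kx: prob_space "K N (Suc t) xs"
      by (intro prob_space_PiM prob_density pf_meas1[OF N] pf_nn[OF N] pf_one[OF N])
    have spK: "space (K N (Suc t) xs) = space (PS N)" by (simp add: space_PiM)
    have setsK: "sets (K N (Suc t) xs) = sets (PS N)" by (intro sets_PiM_cong) auto
    show "emeasure (K N (Suc t) xs) A \<le> ennreal e1 + indicator C xs"
    proof (cases "xs \<in> C")
      case True
      have "emeasure (K N (Suc t) xs) A \<le> 1" by (rule Kx.emeasure_le_1)
      also have "\<dots> \<le> ennreal e1 + indicator C xs" using True by simp
      finally show ?thesis .
    next
      case False
      then have Qm: "\<bar>Q xs - m\<bar> \<le> \<epsilon> / 2" using xs unfolding C_def by auto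
      define B where "B = {z \<in> space (K N (Suc t) xs). \<bar>(\<Sum>i<N. psi (z i)) / real N -
          (\<integral>x. psi x * pf_dens mu a b y N (Suc t) xs x \<partial>mu)\<bar> > \<epsilon> / 2}"
      have intQ: "(\<integral>x. psi x * pf_dens mu a b y N (Suc t) xs x \<partial>mu) = Q xs"
        unfolding Q_def by (rule pf_integrable(2)[OF N psim S])
      have Bm: "B \<in> sets (K N (Suc t) xs)" unfolding B_def intQ setsK spK by measurable
      have "A \<subseteq> B"
      proof
        fix z assume "z \<in> A"
        then have z: "z \<in> space (PS N)" "\<bar>(\<Sum>i<N. psi (z i)) / real N - m\<bar> > \<epsilon>"
          unfolding A_def PT_spc[OF N] by auto
        have "\<bar>(\<Sum>i<N. psi (z i)) / real N - Q xs\<bar> > \<epsilon> / 2" using z(2) Qm by linarith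
        then show "z \<in> B" unfolding B_def intQ spK using z(1) by auto
      qed
      then have "emeasure (K N (Suc t) xs) A \<le> emeasure (K N (Suc t) xs) B" by (rule emeasure_mono[OF _ Bm])
      also have "\<dots> = ennreal (measure (K N (Suc t) xs) B)" by (rule Kx.emeasure_eq_measure)
      also have "measure (K N (Suc t) xs) B \<le> e1" unfolding B_def e1_def
        by (rule hoeffding_prod[OF pf_meas1[OF N] pf_nn[OF N] pf_one[OF N] psim S S0 N]) (use e in simp)
      then have "ennreal (measure (K N (Suc t) xs) B) \<le> ennreal e1" by (rule ennreal_leI)
      finally show ?thesis by (rule order_trans) simp
    qed
  qed
  also have "\<dots> = ennreal e1 + emeasure (PT N t) C"
    using Cm by (subst nn_integral_add) (auto simp: P.emeasure_space_1)
  also have "\<dots> = ennreal (e1 + measure (PT N t) C)"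
    unfolding e1_def by (simp add: P.emeasure_eq_measure ennreal_plus)
  finally have h: "ennreal (measure (PT N (Suc t)) A) \<le> ennreal (e1 + measure (PT N t) C)"
    unfolding P'.emeasure_eq_measure .
  have "0 \<le> e1 + measure (PT N t) C" unfolding e1_def by simp
  with h have "measure (PT N (Suc t)) A \<le> e1 + measure (PT N t) C" by (simp add: ennreal_le_iff)
  also have "measure (PT N t) C \<le> 2 * alpha t * exp (- (real N * (\<epsilon> / 2)\<^sup>2) /
       ((4 * bet t * (gamma mu a b y (Suc t))\<^sup>2 / (kappa mu a0 a b y (Suc t))\<^sup>2) * S\<^sup>2))"
    unfolding C_def Q_def m_def by (rule ratio[OF N IH psim S S0]) (use e in simp)
  also have "e1 + 2 * alpha t * exp (- (real N * (\<epsilon> / 2)\<^sup>2) /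
       ((4 * bet t * (gamma mu a b y (Suc t))\<^sup>2 / (kappa mu a0 a b y (Suc t))\<^sup>2) * S\<^sup>2))
     \<le> alpha (Suc t) * exp (- (real N * \<epsilon>\<^sup>2) / (bet (Suc t) * S\<^sup>2))"
  proof -
    define D where "D = 4 * bet t * (gamma mu a b y (Suc t))\<^sup>2 / (kappa mu a0 a b y (Suc t))\<^sup>2"
    define E where "E = exp (- (real N * \<epsilon>\<^sup>2) / (bet (Suc t) * S\<^sup>2))"
    have D0: "D > 0" unfolding D_def by (rule Dpos)
    have r1: "- (real N * (\<epsilon> / 2)\<^sup>2) / (2 * S\<^sup>2) = - (real N * \<epsilon>\<^sup>2) / (8 * S\<^sup>2)"
      by (simp add: power2_eq_square field_simps)
    have r2: "- (real N * (\<epsilon> / 2)\<^sup>2) / (D * S\<^sup>2) = - (real N * \<epsilon>\<^sup>2) / ((4 * D) * S\<^sup>2)"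
      using D0 S0 by (simp add: power2_eq_square field_simps)
    have "exp (- (real N * \<epsilon>\<^sup>2) / (8 * S\<^sup>2)) \<le> E" unfolding E_def
      using S0 beta_Suc_ge(1)[of t] by (intro exp_aux mult_right_mono) auto
    moreover have "exp (- (real N * \<epsilon>\<^sup>2) / ((4 * D) * S\<^sup>2)) \<le> E" unfolding E_def
      using S0 D0 beta_Suc_ge(3)[of t] unfolding D_def[symmetric]
      by (intro exp_aux mult_right_mono) auto
    ultimately have "e1 + 2 * alpha t * exp (- (real N * (\<epsilon> / 2)\<^sup>2) / (D * S\<^sup>2)) \<le> 2 * E + 2 * alpha t * E"
      unfolding e1_def r1 r2 using alpha_ge[of t] by (intro add_mono mult_left_mono) auto
    also have "\<dots> \<le> alpha (Suc t) * E"
      using alpha_ge[of t] by (simp add: E_def algebra_simps)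
    finally show ?thesis unfolding D_def E_def .
  qed
  finally show "measure (PT N (Suc t)) {xs \<in> space (PT N (Suc t)). \<bar>(\<Sum>i<N. psi (xs i)) / real N - mfilt mu a0 a b y (Suc t) psi\<bar> > \<epsilon>}
     \<le> alpha (Suc t) * exp (- (real N * \<epsilon>\<^sup>2) / (bet (Suc t) * S\<^sup>2))"
    unfolding A_def m_def by simp
qed


lemma claim_all: "(N::nat) \<ge> 1 \<Longrightarrow> Claim N T"
  by (induction T) (auto intro: claim0 claim_Suc)

lemma claimD:
  assumes "(N::nat) \<ge> 1" "psi \<in> borel_measurable mu" "\<And>x. \<bar>psi x\<bar> \<le> S" "S > 0" "\<epsilon> > 0"
  shows "measure (PT N T) {xs \<in> space (PT N T). \<bar>(\<Sum>i<N. psi (xs i)) / real N - mfilt mu a0 a b y T psi\<bar> > \<epsilon>}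
     \<le> alpha T * exp (- (real N * \<epsilon>\<^sup>2) / (bet T * S\<^sup>2))"
proof -
  have "Claim N T" by (rule claim_all[OF assms(1)])
  then have "\<forall>x. \<bar>psi x\<bar> \<le> S \<Longrightarrow> ?thesis" unfolding Claim_def using assms(2,4,5) by blast
  then show ?thesis using assms(3) by blast
qed

end

theorem lemma2p1:
  fixes mu :: "'a::euclidean_space measure" and nu :: "'b::euclidean_space measure"
    and a0 :: "'a \<Rightarrow> real" and a :: "nat \<Rightarrow> 'a \<Rightarrow> 'a \<Rightarrow> real"
    and b :: "nat \<Rightarrow> 'a \<Rightarrow> 'b \<Rightarrow> real" and y :: "nat \<Rightarrow> 'b" and psi :: "'a \<Rightarrow> real"
  assumes mu: "sets mu = sets borel" "sigma_finite_measure mu"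
    and nu: "sets nu = sets borel" "sigma_finite_measure nu"
    and a0: "a0 \<in> borel_measurable mu" "\<forall>x. a0 x \<ge> 0" "(\<integral>\<^sup>+ x. ennreal (a0 x) \<partial>mu) = 1"
    and a: "\<forall>t\<ge>1. (\<lambda>(x, x'). a t x x') \<in> borel_measurable (mu \<Otimes>\<^sub>M mu)"
           "\<forall>t\<ge>1. \<forall>x x'. a t x x' \<ge> 0"
           "\<forall>t\<ge>1. \<forall>x. (\<integral>\<^sup>+ x'. ennreal (a t x x') \<partial>mu) = 1"
    and b: "\<forall>t\<ge>1. (\<lambda>(x, v). b t x v) \<in> borel_measurable (mu \<Otimes>\<^sub>M nu)"
           "\<forall>t\<ge>1. \<forall>x v. b t x v \<ge> 0"
           "\<forall>t\<ge>1. \<forall>x. (\<integral>\<^sup>+ v. ennreal (b t x v) \<partial>nu) = 1"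
    and A0: "\<forall>t\<ge>1. (SUP x. Lone mu a b y t x) < \<top>"
            "\<forall>t\<ge>1. \<forall>x. Lone mu a b y t x > 0"
    and psi: "psi \<in> borel_measurable mu" "bounded (range psi)"
  shows "(\<forall>T N (\<epsilon>::real). N \<ge> 1 \<and> \<epsilon> > 0 \<longrightarrow>
            measure (particles mu a0 a b y N T)
              {xs \<in> space (particles mu a0 a b y N T).
                 \<bar>(\<Sum>i<N. psi (xs i)) / real N - mfilt mu a0 a b y T psi\<bar> > \<epsilon>}
            \<le> alpha T * exp (- (real N * \<epsilon>\<^sup>2) /
                 (beta (gamma mu a b y) (kappa mu a0 a b y) T * (SUP x. \<bar>psi x\<bar>)\<^sup>2)))
       \<and> (\<forall>T N (\<epsilon>::real). T \<ge> 1 \<and> N \<ge> 1 \<and> \<epsilon> > 0 \<longrightarrow>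
            measure (particles mu a0 a b y N (T - 1))
              {xs \<in> space (particles mu a0 a b y N (T - 1)).
                 \<bar>(\<integral> x. psi x * (pf_dens mu a b y N T xs x - filt mu a0 a b y T x) \<partial>mu)\<bar> > \<epsilon>}
            \<le> alpha T * exp (- (real N * \<epsilon>\<^sup>2) /
                 (beta (gamma mu a b y) (kappa mu a0 a b y) T * (SUP x. \<bar>psi x\<bar>)\<^sup>2)))"
proof -
  interpret H: hmm mu nu a0 a b y
    by (rule hmm.intro[OF mu nu a0 a b A0])
  obtain B where B: "\<And>x. norm (psi x) \<le> B" using psi(2) unfolding bounded_iff by auto
  have bdd: "bdd_above (range (\<lambda>x. \<bar>psi x\<bar>))" using B by (auto intro!: bdd_aboveI2)
  define S where "S = (SUP x. \<bar>psi x\<bar>)"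
  have S: "\<And>x. \<bar>psi x\<bar> \<le> S" unfolding S_def by (rule cSUP_upper[OF _ bdd]) simp
  have S0: "S \<ge> 0" using S[of undefined] by linarith
  have zero: "alpha T * exp (- (real N * \<epsilon>\<^sup>2) / (beta (gamma mu a b y) (kappa mu a0 a b y) T * S\<^sup>2)) \<ge> 1"
    if "S = 0" for T N \<epsilon> using that H.alpha_ge[of T] by simp
  show ?thesis
  proof (intro conjI allI impI; elim conjE)
    fix T N :: nat and \<epsilon> :: real assume N: "N \<ge> 1" and e: "\<epsilon> > 0"
    interpret P: prob_space "particles mu a0 a b y N T" by (rule H.PT_prob[OF N])
    show "measure (particles mu a0 a b y N T)
              {xs \<in> space (particles mu a0 a b y N T).
                 \<bar>(\<Sum>i<N. psi (xs i)) / real N - mfilt mu a0 a b y T psi\<bar> > \<epsilon>}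
            \<le> alpha T * exp (- (real N * \<epsilon>\<^sup>2) /
                 (beta (gamma mu a b y) (kappa mu a0 a b y) T * (SUP x. \<bar>psi x\<bar>)\<^sup>2))"
      (is "measure ?M {xs \<in> space ?M. ?P xs} \<le> ?R")
    proof (cases "S = 0")
      case True
      have Sz: "(SUP x. \<bar>psi x\<bar>) = 0" using True unfolding S_def .
      have "measure ?M {xs \<in> space ?M. ?P xs} \<le> 1" by (rule P.prob_le_1)
      also have "1 \<le> alpha T" using H.alpha_ge[of T] by simp
      finally show ?thesis using Sz by simp
    next
      case False
      then have "S > 0" using S0 by simp
      from H.claimD[OF N psi(1) S this e] show ?thesis unfolding S_def .
    qed
  next
    fix T N :: nat and \<epsilon> :: real assume T: "T \<ge> 1" and N: "N \<ge> 1" and e: "\<epsilon> > 0"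
    obtain t where t: "T = Suc t" using T by (cases T) auto
    interpret P: prob_space "particles mu a0 a b y N (T - 1)" by (rule H.PT_prob[OF N])
    show "measure (particles mu a0 a b y N (T - 1))
              {xs \<in> space (particles mu a0 a b y N (T - 1)).
                 \<bar>(\<integral> x. psi x * (pf_dens mu a b y N T xs x - filt mu a0 a b y T x) \<partial>mu)\<bar> > \<epsilon>}
            \<le> alpha T * exp (- (real N * \<epsilon>\<^sup>2) /
                 (beta (gamma mu a b y) (kappa mu a0 a b y) T * (SUP x. \<bar>psi x\<bar>)\<^sup>2))"
      (is "measure ?M {xs \<in> space ?M. ?P xs} \<le> ?R")
    proof (cases "S = 0")
      case True
      have Sz: "(SUP x. \<bar>psi x\<bar>) = 0" using True unfolding S_def .
      have "measure ?M {xs \<in> space ?M. ?P xs} \<le> 1" by (rule P.prob_le_1)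
      also have "1 \<le> alpha T" using H.alpha_ge[of T] by simp
      finally show ?thesis using Sz by simp
    next
      case False
      then have "S > 0" using S0 by simp
      from H.second[OF N H.claim_all[OF N, of t] psi(1) S this e] show ?thesis unfolding t S_def by simp
    qed
  qed
qed

end
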